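(* Let $R_0\subset\mathcal{D}_0\subset\mathbb{R}^2$ be a closed OU set about $(x_0,y_0)$ with $\lambda(R_0)\in(0,\infty)$, $R_0^X\in(0,\infty)$, $R_0^Y\in(0,\infty)$, written as $R_0=\{(x,y):y_0\le y\le h_0(x),\,x_0\le x\le x_0+R_0^X\}$ for a non-increasing left-continuous $h_0:[x_0,x_0+R_0^X]\to[y_0,y_0+R_0^Y]$ with $h_0(x_0)=y_0+R_0^Y$. Let rectangles $[x_{1i},x_{2i}]\times[y_{1i},y_{2i}]$, $i=1,\dots,n$, be given with $x_0\le x_{1i}\le x_{2i}\le\infty$, $y_0\le y_{1i}\le y_{2i}\le\infty$. Let $x_0<x_1<\cdots<x_{n_{R_0}}<x_{n_{R_0}+1}=x_0+R_0^X$ be the distinct values, sorted, among $x_0$, $x_0+R_0^X$ and those of the numbers $x_{1i}$, $x_{2i}$ (finite ones), $h_0^{-1}(y_{1i})$, $h_0^{-1}(y_{2i})$ (when well defined) that lie in $(x_0,x_0+R_0^X)$. Let $h:[x_0,x_0+R_0^X]\to[y_0,y_0+R_0^Y]$ satisfy: (a) $\int_{x_i}^{x_{i+1}}(h(x)-y_0)\,dx=\lambda(\{(x,y):x_i\le x\le x_{i+1},y\ge y_0\}\cap R_0)$ for $i=0,\dots,n_{R_0}$; (b) $h_0(x_{i+1})\le h(x)\le h_0(x_i+)$ for $x\in(x_i,x_{i+1}]$, $i=0,\dots,n_{R_0}$; (c) $h$ is non-increasing and left-continuous with $h(x_0)=h(x_0+)$. Define $R=\{(x,y):y_0\le y\le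 h(x),\,x_0\le x\le x_0+R_0^X\}$. Then $\lambda(R)=\lambda(R_0)$, $R^X\le R_0^X$, $R^Y\le R_0^Y$, and $\lambda([x_{1i},x_{2i}]\times[y_{1i},y_{2i}]\cap R)=\lambda([x_{1i},x_{2i}]\times[y_{1i},y_{2i}]\cap R_0)$ for all $i=1,\dots,n$.
   Context: Bivariate setting: $\mathcal{D}_0=[x_0,\infty)\times[y_0,\infty)$. A set $K\subset\mathcal{D}_0$ is OU about $(x_0,y_0)$ if $(x,y)\in K$, $x_0\le x'\le x$, $y_0\le y'\le y$ imply $(x',y')\in K$. For an OU set $K$: $K^X=\sup\{x:(x,y_0)\in K\}-x_0$ and $K^Y=\sup\{y:(x_0,y)\in K\}-y_0$. $\lambda$ is Lebesgue measure on $\mathbb{R}^2$. $h_0^{-1}(y)=\sup\{x:h_0(x)\ge y\}$, defined when $\{x:h_0(x)\ge y\}\ne\emptyset$. $h(x+)$ denotes the right limit. *)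

theory Defs
  imports "HOL-Analysis.Analysis"
begin

definition D0 :: "real \<Rightarrow> real \<Rightarrow> (real \<times> real) set" where
  "D0 x0 y0 = {x0..} \<times> {y0..}"

definition is_OU :: "real \<Rightarrow> real \<Rightarrow> (real \<times> real) set \<Rightarrow> bool" where
  "is_OU x0 y0 K \<longleftrightarrow> K \<subseteq> D0 x0 y0 \<and>
     (\<forall>x y x' y'. (x, y) \<in> K \<and> x0 \<le> x' \<and> x' \<le> x \<and> y0 \<le> y' \<and> y' \<le> y \<longrightarrow> (x', y') \<in> K)"

text \<open>K^X and K^Y (extended reals, since the supremum may be infinite).\<close>
definition OU_X :: "real \<Rightarrow> real \<Rightarrow> (real \<times> real) set \<Rightarrow> ereal" where
  "OU_X x0 y0 K = Sup (ereal ` {x. (x, y0) \<in> K}) - ereal x0"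

definition OU_Y :: "real \<Rightarrow> real \<Rightarrow> (real \<times> real) set \<Rightarrow> ereal" where
  "OU_Y x0 y0 K = Sup (ereal ` {y. (x0, y) \<in> K}) - ereal y0"

definition rect :: "real \<Rightarrow> ereal \<Rightarrow> real \<Rightarrow> ereal \<Rightarrow> (real \<times> real) set" where
  "rect x1 x2 y1 y2 = {(x, y). x1 \<le> x \<and> ereal x \<le> x2 \<and> y1 \<le> y \<and> ereal y \<le> y2}"

definition region :: "real \<Rightarrow> real \<Rightarrow> real \<Rightarrow> (real \<Rightarrow> real) \<Rightarrow> (real \<times> real) set" where
  "region x0 y0 a h = {(x, y). y0 \<le> y \<and> y \<le> h x \<and> x0 \<le> x \<and> x \<le> x0 + a}"

text \<open>The set {x in dom: h0 x >= y}; h0^{-1}(y) is its supremum, defined when nonempty.\<close>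
definition inv_set :: "real \<Rightarrow> real \<Rightarrow> (real \<Rightarrow> real) \<Rightarrow> ereal \<Rightarrow> real set" where
  "inv_set x0 a h0 y = {x \<in> {x0..x0 + a}. y \<le> ereal (h0 x)}"

definition gen_inv :: "real \<Rightarrow> real \<Rightarrow> (real \<Rightarrow> real) \<Rightarrow> ereal \<Rightarrow> real" where
  "gen_inv x0 a h0 y = Sup (inv_set x0 a h0 y)"

definition cand_points ::
  "real \<Rightarrow> real \<Rightarrow> (real \<Rightarrow> real) \<Rightarrow> nat \<Rightarrow> (nat \<Rightarrow> real) \<Rightarrow> (nat \<Rightarrow> ereal)
    \<Rightarrow> (nat \<Rightarrow> real) \<Rightarrow> (nat \<Rightarrow> ereal) \<Rightarrow> real set" where
  "cand_points x0 a h0 n x1 x2 y1 y2 =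
     (\<Union>i\<in>{1..n}.
        {x1 i} \<union> {x. ereal x = x2 i}
        \<union> (if inv_set x0 a h0 (ereal (y1 i)) \<noteq> {} then {gen_inv x0 a h0 (ereal (y1 i))} else {})
        \<union> (if inv_set x0 a h0 (y2 i) \<noteq> {} then {gen_inv x0 a h0 (y2 i)} else {}))"

definition partition_pts ::
  "real \<Rightarrow> real \<Rightarrow> (real \<Rightarrow> real) \<Rightarrow> nat \<Rightarrow> (nat \<Rightarrow> real) \<Rightarrow> (nat \<Rightarrow> ereal)
    \<Rightarrow> (nat \<Rightarrow> real) \<Rightarrow> (nat \<Rightarrow> ereal) \<Rightarrow> real list" where
  "partition_pts x0 a h0 n x1 x2 y1 y2 =
     sorted_list_of_set ({x0, x0 + a} \<union> (cand_points x0 a h0 n x1 x2 y1 y2 \<inter> {x0<..<x0 + a}))"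

end

theory Submission
  imports Defs
begin

lemma right_lim_exists:
  fixes g :: "real \<Rightarrow> real"
  assumes mono: "\<forall>x\<in>{x0..x0 + a}. \<forall>x'\<in>{x0..x0 + a}. x \<le> x' \<longrightarrow> g x' \<le> g x"
    and p: "x0 \<le> p" "p < x0 + a"
  shows "\<exists>L. (g \<longlongrightarrow> L) (at_right p)"
proof -
  define f where "f x = - g (max x0 (min (x0 + a) x))" for x
  have "(f \<longlongrightarrow> Inf (f ` ({p<..} \<inter> UNIV))) (at p within ({p<..} \<inter> UNIV))"
  proof (rule Lim_right_bound[where K = "- g x0"])
    fix u v :: real assume "u \<le> v"
    then show "f u \<le> f v" unfolding f_def using mono p by auto
  next
    fix u :: real
    show "- g x0 \<le> f u" unfolding f_def using mono p by auto
  qed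
  then have t: "(f \<longlongrightarrow> Inf (f ` ({p<..} \<inter> UNIV))) (at_right p)" by simp
  have ev: "eventually (\<lambda>x. - f x = g x) (at_right p)"
    using eventually_at_right_real[OF p(2)] by eventually_elim (use p in \<open>auto simp: f_def\<close>)
  have "((\<lambda>x. - f x) \<longlongrightarrow> - Inf (f ` ({p<..} \<inter> UNIV))) (at_right p)"
    by (intro tendsto_intros t)
  then show ?thesis using tendsto_cong[OF ev] by blast
qed

lemma dichotomy:
  fixes h h0 :: "real \<Rightarrow> real"
  assumes h0_mono: "\<forall>x\<in>{x0..x0 + a}. \<forall>x'\<in>{x0..x0 + a}. x \<le> x' \<longrightarrow> h0 x' \<le> h0 x"
    and h0_lcont: "\<forall>x\<in>{x0<..x0 + a}. continuous (at_left x) h0"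
    and pq: "x0 \<le> p" "p < q" "q \<le> x0 + a"
    and hb: "\<forall>x\<in>{p<..q}. h0 q \<le> h x \<and> h x \<le> Lim (at_right p) h0"
    and H: "inv_set x0 a h0 (ereal y) \<noteq> {} \<Longrightarrow> \<not> (p < gen_inv x0 a h0 (ereal y) \<and> gen_inv x0 a h0 (ereal y) < q)"
  shows "(\<forall>x\<in>{p<..q}. y \<le> h0 x \<and> y \<le> h x) \<or> (\<forall>x\<in>{p<..q}. h0 x \<le> y \<and> h x \<le> y)"
proof -
  define S where "S = inv_set x0 a h0 (ereal y)"
  have S: "S = {x \<in> {x0..x0 + a}. y \<le> h0 x}" unfolding S_def inv_set_def by simp
  have bdd: "bdd_above S" unfolding S by (rule bdd_aboveI[of _ "x0 + a"]) auto
  show ?thesis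
  proof (cases "S \<noteq> {} \<and> q \<le> Sup S")
    case True
    have below: "y \<le> h0 x" if "x0 \<le> x" "x < q" for x
    proof -
      from True that have "x < Sup S" by auto
      then obtain s where s: "s \<in> S" "x < s" using less_cSup_iff[OF _ bdd] True by auto
      then have s2: "x0 \<le> s" "s \<le> x0 + a" "y \<le> h0 s" unfolding S by auto
      have "h0 s \<le> h0 x" using h0_mono s2 that s(2) by auto
      then show ?thesis using s2 by linarith
    qed
    have "(h0 \<longlongrightarrow> h0 q) (at_left q)"
      using h0_lcont pq by (simp add: continuous_within)
    moreover have "eventually (\<lambda>x. y \<le> h0 x) (at_left q)"
      using eventually_at_left_real[of x0 q] pq
      by (smt (verit, ccfv_SIG) below eventually_mono greaterThanLessThan_iff)
    ultimately have yq: "y \<le> h0 q"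
      by (intro tendsto_lowerbound) auto
    have "\<forall>x\<in>{p<..q}. y \<le> h0 x \<and> y \<le> h x"
    proof
      fix x assume x: "x \<in> {p<..q}"
      have "h0 q \<le> h0 x" using h0_mono x pq by auto
      then show "y \<le> h0 x \<and> y \<le> h x" using hb x yq by fastforce
    qed
    then show ?thesis by blast
  next
    case False
    have lt: "h0 x < y" if "x \<in> {p<..q}" for x
    proof (rule ccontr)
      assume "\<not> h0 x < y"
      then have xS: "x \<in> S" unfolding S using that pq by auto
      then have "S \<noteq> {}" by auto
      with False have "Sup S < q" by auto
      moreover have "\<not> (p < Sup S \<and> Sup S < q)"
        using H \<open>S \<noteq> {}\<close> unfolding S_def gen_inv_def by auto
      ultimately have "Sup S \<le> p" by auto
      moreover have "x \<le> Sup S" using cSup_upper[OF xS bdd] .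
      ultimately show False using that by auto
    qed
    obtain L where L: "(h0 \<longlongrightarrow> L) (at_right p)"
      using right_lim_exists[OF h0_mono, of p] pq by auto
    have "Lim (at_right p) h0 = L" using L by (intro tendsto_Lim) auto
    moreover have "L \<le> y"
    proof (rule tendsto_upperbound[OF L])
      show "eventually (\<lambda>x. h0 x \<le> y) (at_right p)"
        using eventually_at_right_real[OF pq(2)]
        by eventually_elim (use lt in \<open>fastforce intro: less_imp_le\<close>)
    qed auto
    ultimately have "\<forall>x\<in>{p<..q}. h0 x \<le> y \<and> h x \<le> y"
      using lt hb by (metis less_eq_real_def order_trans)
    then show ?thesis by blast
  qed
qed

lemma per_interval:
  fixes g g0 :: "real \<Rightarrow> real"
  assumes meas[measurable]: "g \<in> borel_measurable borel" "g0 \<in> borel_measurable borel"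
    and pq: "p < q"
    and eqint: "(\<integral>\<^sup>+x. indicator {p<..q} x * ennreal (g x - y0) \<partial>lborel)
              = (\<integral>\<^sup>+x. indicator {p<..q} x * ennreal (g0 x - y0) \<partial>lborel)"
    and fin: "(\<integral>\<^sup>+x. indicator {p<..q} x * ennreal (g0 x - y0) \<partial>lborel) < \<infinity>"
    and c1: "y0 \<le> c1"
    and d1: "(\<forall>x\<in>{p<..q}. c1 \<le> g0 x \<and> c1 \<le> g x) \<or> (\<forall>x\<in>{p<..q}. g0 x \<le> c1 \<and> g x \<le> c1)"
    and d2: "(\<forall>x\<in>{p<..q}. C2 \<le> g0 x \<and> C2 \<le> g x) \<or> (\<forall>x\<in>{p<..q}. g0 x \<le> C2 \<and> g x \<le> C2)"
  shows "(\<integral>\<^sup>+x. indicator {p<..q} x * ennreal (min (g x) C2 - c1) \<partial>lborel)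
       = (\<integral>\<^sup>+x. indicator {p<..q} x * ennreal (min (g0 x) C2 - c1) \<partial>lborel)"
proof (cases "\<forall>x\<in>{p<..q}. g0 x \<le> c1 \<and> g x \<le> c1")
  case True
  show ?thesis
  proof (rule nn_integral_cong)
    fix x show "indicator {p<..q} x * ennreal (min (g x) C2 - c1) = indicator {p<..q} x * ennreal (min (g0 x) C2 - c1)"
    proof (cases "x \<in> {p<..q}")
      case xin: True
      then have "min (g x) C2 - c1 \<le> 0" "min (g0 x) C2 - c1 \<le> 0" using True xin by (auto simp: min_le_iff_disj)
      then show ?thesis by (simp add: ennreal_neg)
    qed simp
  qed
next
  case False
  with d1 have A: "\<forall>x\<in>{p<..q}. c1 \<le> g0 x \<and> c1 \<le> g x" by blast
  show ?thesis
  proof (cases "\<forall>x\<in>{p<..q}. C2 \<le> g0 x \<and> C2 \<le> g x")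
    case True
    show ?thesis
    proof (rule nn_integral_cong)
      fix x show "indicator {p<..q} x * ennreal (min (g x) C2 - c1) = indicator {p<..q} x * ennreal (min (g0 x) C2 - c1)"
      proof (cases "x \<in> {p<..q}")
        case xin: True
        then have "min (g x) C2 = C2" "min (g0 x) C2 = C2" using True by auto
        then show ?thesis by simp
      qed simp
    qed
  next
    case False
    with d2 have B: "\<forall>x\<in>{p<..q}. g0 x \<le> C2 \<and> g x \<le> C2" by blast
    have split: "indicator {p<..q} x * ennreal (f x - y0) =
        indicator {p<..q} x * ennreal (min (f x) C2 - c1) + indicator {p<..q} x * ennreal (c1 - y0)"
      if "\<forall>x\<in>{p<..q}. c1 \<le> f x \<and> f x \<le> C2" for f :: "real \<Rightarrow> real" and x
    proof (cases "x \<in> {p<..q}")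
      case True
      then have "c1 \<le> f x" "f x \<le> C2" using that by auto
      then show ?thesis using True c1 by (simp add: min_def ennreal_plus[symmetric])
    qed simp
    have fA: "\<forall>x\<in>{p<..q}. c1 \<le> g x \<and> g x \<le> C2" and fA0: "\<forall>x\<in>{p<..q}. c1 \<le> g0 x \<and> g0 x \<le> C2"
      using A B by auto
    define K where "K = (\<integral>\<^sup>+x. indicator {p<..q} x * ennreal (c1 - y0) \<partial>lborel)"
    have "K = (\<integral>\<^sup>+x. ennreal (c1 - y0) * indicator {p<..q} x \<partial>lborel)"
      unfolding K_def by (simp add: mult.commute)
    also have "\<dots> = ennreal (c1 - y0) * emeasure lborel {p<..q}"
      by (rule nn_integral_cmult_indicator) simp
    also have "\<dots> = ennreal (c1 - y0) * ennreal (q - p)" using pq by simp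
    finally have K: "K \<noteq> \<infinity>" by (simp add: ennreal_mult_eq_top_iff)
    have e1: "(\<integral>\<^sup>+x. indicator {p<..q} x * ennreal (g x - y0) \<partial>lborel)
       = (\<integral>\<^sup>+x. indicator {p<..q} x * ennreal (min (g x) C2 - c1) \<partial>lborel) + K"
      unfolding K_def split[OF fA] by (rule nn_integral_add) auto
    have e2: "(\<integral>\<^sup>+x. indicator {p<..q} x * ennreal (g0 x - y0) \<partial>lborel)
       = (\<integral>\<^sup>+x. indicator {p<..q} x * ennreal (min (g0 x) C2 - c1) \<partial>lborel) + K"
      unfolding K_def split[OF fA0] by (rule nn_integral_add) auto
    have "K + (\<integral>\<^sup>+x. indicator {p<..q} x * ennreal (min (g x) C2 - c1) \<partial>lborel)
        = K + (\<integral>\<^sup>+x. indicator {p<..q} x * ennreal (min (g0 x) C2 - c1) \<partial>lborel)"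
      using eqint e1 e2 by (simp only: add.commute)
    then show ?thesis using K by (simp only: ennreal_add_left_cancel) simp
  qed
qed

lemma telescope:
  fixes f f0 :: "real \<Rightarrow> ennreal" and xs :: "real list"
  assumes meas[measurable]: "f \<in> borel_measurable borel" "f0 \<in> borel_measurable borel"
    and sorted: "sorted_wrt (<) xs"
    and step: "\<And>k. Suc k < length xs \<Longrightarrow>
      (\<integral>\<^sup>+x. indicator {xs!k<..xs!Suc k} x * f x \<partial>lborel) = (\<integral>\<^sup>+x. indicator {xs!k<..xs!Suc k} x * f0 x \<partial>lborel)"
    and ij: "i \<le> j" "j < length xs"
  shows "(\<integral>\<^sup>+x. indicator {xs!i<..xs!j} x * f x \<partial>lborel) = (\<integral>\<^sup>+x. indicator {xs!i<..xs!j} x * f0 x \<partial>lborel)"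
  using ij
proof (induction j)
  case 0
  then show ?case by simp
next
  case (Suc j)
  show ?case
  proof (cases "i = Suc j")
    case True then show ?thesis by simp
  next
    case False
    then have ij': "i \<le> j" "j < length xs" using Suc.prems by auto
    have le: "xs!i \<le> xs!j"
    proof (cases "i = j")
      case False then show ?thesis using sorted ij' sorted_wrt_nth_less[of "(<)" xs i j] by simp
    qed simp
    have lt: "xs!j < xs!Suc j" using sorted Suc.prems by (simp add: sorted_wrt_nth_less)
    have ind: "indicator {xs!i<..xs!Suc j} x = (indicator {xs!i<..xs!j} x + indicator {xs!j<..xs!Suc j} x :: ennreal)" for x
      using le lt by (auto simp: indicator_def)
    have sp: "(\<integral>\<^sup>+x. indicator {xs!i<..xs!Suc j} x * F x \<partial>lborel) =
       (\<integral>\<^sup>+x. indicator {xs!i<..xs!j} x * F x \<partial>lborel) + (\<integral>\<^sup>+x. indicator {xs!j<..xs!Suc j} x * F x \<partial>lborel)"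
      if [measurable]: "F \<in> borel_measurable borel" for F :: "real \<Rightarrow> ennreal"
      unfolding ind distrib_right by (rule nn_integral_add) auto
    have "Suc j < length xs" using Suc.prems by simp
    then show ?thesis
      using sp[of f] sp[of f0] Suc.IH[OF ij'] step[of j] by (simp only: meas)
  qed
qed

lemma hypo_emeasure:
  fixes g :: "real \<Rightarrow> real"
  assumes [measurable]: "g \<in> borel_measurable borel"
  shows "emeasure lborel {(x,y). l \<le> x \<and> x \<le> u \<and> c \<le> y \<and> y \<le> g x}
       = (\<integral>\<^sup>+x. indicator {l..u} x * ennreal (g x - c) \<partial>lborel)"
proof -
  let ?S = "{(x,y). l \<le> x \<and> x \<le> u \<and> c \<le> y \<and> y \<le> g x}"
  have S: "?S \<in> sets (lborel \<Otimes>\<^sub>M lborel)"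
  proof -
    have "{p \<in> space (borel \<Otimes>\<^sub>M borel). l \<le> fst p \<and> fst p \<le> u \<and> c \<le> snd p \<and> snd p \<le> g (fst p)} \<in> sets (borel \<Otimes>\<^sub>M (borel::real measure))"
      by measurable
    moreover have "{p \<in> space (borel \<Otimes>\<^sub>M borel). l \<le> fst p \<and> fst p \<le> u \<and> c \<le> snd p \<and> snd p \<le> g (fst p)} = ?S"
      by (auto simp: space_pair_measure)
    ultimately show ?thesis by (simp add: sets_pair_measure_cong[OF sets_lborel sets_lborel])
  qed
  have "emeasure lborel ?S = emeasure (lborel \<Otimes>\<^sub>M lborel) ?S" by (simp add: lborel_prod)
  also have "\<dots> = (\<integral>\<^sup>+x. emeasure lborel (Pair x -` ?S) \<partial>lborel)"
    by (rule lborel.emeasure_pair_measure_alt[OF S])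
  also have "\<dots> = (\<integral>\<^sup>+x. indicator {l..u} x * ennreal (g x - c) \<partial>lborel)"
  proof (rule nn_integral_cong)
    fix x
    show "emeasure lborel (Pair x -` ?S) = indicator {l..u} x * ennreal (g x - c)"
    proof (cases "l \<le> x \<and> x \<le> u")
      case True
      then have "Pair x -` ?S = {c..g x}" by auto
      then show ?thesis using True by (simp add: emeasure_lborel_Icc_eq ennreal_neg)
    next
      case False
      have e: "Pair x -` ?S = {}" using False by auto
      show ?thesis unfolding e using False by simp
    qed
  qed
  finally show ?thesis .
qed

lemma clamp_meas:
  fixes g :: "real \<Rightarrow> real"
  assumes mono: "\<forall>x\<in>{x0..x0 + a}. \<forall>x'\<in>{x0..x0 + a}. x \<le> x' \<longrightarrow> g x' \<le> g x"
    and a: "0 \<le> a"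
  shows "(\<lambda>x. g (max x0 (min (x0 + a) x))) \<in> borel_measurable borel"
proof -
  have "mono (\<lambda>x. - g (max x0 (min (x0 + a) x)))"
  proof (rule monoI)
    fix u v :: real assume "u \<le> v"
    then show "- g (max x0 (min (x0 + a) u)) \<le> - g (max x0 (min (x0 + a) v))"
      using mono a by auto
  qed
  then have "(\<lambda>x. - g (max x0 (min (x0 + a) x))) \<in> borel_measurable borel"
    by (rule borel_measurable_mono)
  then have "(\<lambda>x. - (- g (max x0 (min (x0 + a) x)))) \<in> borel_measurable borel"
    by (rule borel_measurable_uminus)
  then show ?thesis by simp
qed

lemma Icc_Ioc_nn:
  fixes f :: "real \<Rightarrow> ennreal"
  shows "(\<integral>\<^sup>+x. indicator {p..q} x * f x \<partial>lborel) = (\<integral>\<^sup>+x. indicator {p<..q} x * f x \<partial>lborel)"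
proof (rule nn_integral_cong_AE)
  show "AE x in lborel. indicator {p..q} x * f x = indicator {p<..q} x * f x"
    using AE_lborel_singleton[of p] by eventually_elim (auto simp: indicator_def)
qed

lemma rect_region:
  fixes g G :: "real \<Rightarrow> real"
  assumes "x0 \<le> x1" "ereal x1 \<le> x2" "y0 \<le> y1" "ereal y1 \<le> y2"
    and G: "\<forall>x\<in>{x0..x0 + a}. G x = g x \<and> g x \<le> y0 + b"
  shows "rect x1 x2 y1 y2 \<inter> region x0 y0 a g =
    {(x,y). x1 \<le> x \<and> x \<le> min (x0 + a) (if x2 = \<infinity> then x0 + a else real_of_ereal x2)
          \<and> y1 \<le> y \<and> y \<le> min (G x) (if y2 = \<infinity> then y0 + b else real_of_ereal y2)}"
proof -
  have x2: "x2 = \<infinity> \<or> x2 = ereal (real_of_ereal x2)" using assms(2)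
    by (cases x2) auto
  have y2: "y2 = \<infinity> \<or> y2 = ereal (real_of_ereal y2)" using assms(4)
    by (cases y2) auto
  show ?thesis
  proof (intro set_eqI iffI)
    fix p assume "p \<in> rect x1 x2 y1 y2 \<inter> region x0 y0 a g"
    then obtain x y where p: "p = (x,y)" "x1 \<le> x" "ereal x \<le> x2" "y1 \<le> y" "ereal y \<le> y2"
       "y0 \<le> y" "y \<le> g x" "x0 \<le> x" "x \<le> x0 + a"
      unfolding rect_def region_def by auto
    have "x \<le> (if x2 = \<infinity> then x0 + a else real_of_ereal x2)"
      using x2 p by (metis ereal_less_eq(3))
    moreover have "y \<le> (if y2 = \<infinity> then y0 + b else real_of_ereal y2)"
      using y2 p G by (smt (verit, best) atLeastAtMost_iff ereal_less_eq(3))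
    ultimately show "p \<in> {(x,y). x1 \<le> x \<and> x \<le> min (x0 + a) (if x2 = \<infinity> then x0 + a else real_of_ereal x2)
          \<and> y1 \<le> y \<and> y \<le> min (G x) (if y2 = \<infinity> then y0 + b else real_of_ereal y2)}"
      using p G by auto
  next
    fix p assume "p \<in> {(x,y). x1 \<le> x \<and> x \<le> min (x0 + a) (if x2 = \<infinity> then x0 + a else real_of_ereal x2)
          \<and> y1 \<le> y \<and> y \<le> min (G x) (if y2 = \<infinity> then y0 + b else real_of_ereal y2)}"
    then obtain x y where p: "p = (x,y)" "x1 \<le> x" "x \<le> x0 + a" "x \<le> (if x2 = \<infinity> then x0 + a else real_of_ereal x2)"
      "y1 \<le> y" "y \<le> G x" "y \<le> (if y2 = \<infinity> then y0 + b else real_of_ereal y2)"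
      by auto
    have "ereal x \<le> x2" using x2 p by (metis PInfty_neq_ereal(1) ereal_less_eq(1) ereal_less_eq(3))
    moreover have "ereal y \<le> y2" using y2 p by (metis PInfty_neq_ereal(1) ereal_less_eq(1) ereal_less_eq(3))
    moreover have "y \<le> g x" using p G assms(1) by auto
    ultimately show "p \<in> rect x1 x2 y1 y2 \<inter> region x0 y0 a g"
      using p assms unfolding rect_def region_def by auto
  qed
qed

theorem mainTheorem6:
  fixes x0 y0 a b :: real
    and R0 :: "(real \<times> real) set"
    and h0 h :: "real \<Rightarrow> real"
    and n :: nat
    and x1 y1 :: "nat \<Rightarrow> real" and x2 y2 :: "nat \<Rightarrow> ereal"
  defines "xs \<equiv> partition_pts x0 a h0 n x1 x2 y1 y2"
  assumes R0_closed: "closed R0"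
    and R0_OU: "is_OU x0 y0 R0"
    and R0_meas: "0 < emeasure lborel R0" "emeasure lborel R0 < \<infinity>"
    and R0_X: "OU_X x0 y0 R0 = ereal a" "0 < a"
    and R0_Y: "OU_Y x0 y0 R0 = ereal b" "0 < b"
    and R0_eq: "R0 = region x0 y0 a h0"
    and h0_range: "\<forall>x\<in>{x0..x0 + a}. h0 x \<in> {y0..y0 + b}"
    and h0_mono: "\<forall>x\<in>{x0..x0 + a}. \<forall>x'\<in>{x0..x0 + a}. x \<le> x' \<longrightarrow> h0 x' \<le> h0 x"
    and h0_lcont: "\<forall>x\<in>{x0<..x0 + a}. continuous (at_left x) h0"
    and h0_x0: "h0 x0 = y0 + b"
    and rects: "\<forall>i\<in>{1..n}. x0 \<le> x1 i \<and> ereal (x1 i) \<le> x2 i \<and> y0 \<le> y1 i \<and> ereal (y1 i) \<le> y2 i"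
    and h_range: "\<forall>x\<in>{x0..x0 + a}. h x \<in> {y0..y0 + b}"
    and h_int: "\<forall>i. Suc i < length xs \<longrightarrow>
        integral {xs ! i..xs ! Suc i} (\<lambda>x. h x - y0)
          = measure lborel ({(x, y). xs ! i \<le> x \<and> x \<le> xs ! Suc i \<and> y0 \<le> y} \<inter> R0)"
    and h_bounds: "\<forall>i. Suc i < length xs \<longrightarrow> (\<forall>x\<in>{xs ! i<..xs ! Suc i}.
        h0 (xs ! Suc i) \<le> h x \<and> h x \<le> Lim (at_right (xs ! i)) h0)"
    and h_mono: "\<forall>x\<in>{x0..x0 + a}. \<forall>x'\<in>{x0..x0 + a}. x \<le> x' \<longrightarrow> h x' \<le> h x"
    and h_lcont: "\<forall>x\<in>{x0<..x0 + a}. continuous (at_left x) h"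
    and h_x0: "(h \<longlongrightarrow> h x0) (at_right x0)"
  shows "emeasure lborel (region x0 y0 a h) = emeasure lborel R0
    \<and> OU_X x0 y0 (region x0 y0 a h) \<le> OU_X x0 y0 R0
    \<and> OU_Y x0 y0 (region x0 y0 a h) \<le> OU_Y x0 y0 R0
    \<and> (\<forall>i\<in>{1..n}. emeasure lborel (rect (x1 i) (x2 i) (y1 i) (y2 i) \<inter> region x0 y0 a h)
                 = emeasure lborel (rect (x1 i) (x2 i) (y1 i) (y2 i) \<inter> R0))"
proof -
  define c where "c x = max x0 (min (x0 + a) x)" for x
  define H where "H x = h (c x)" for x
  define H0 where "H0 x = h0 (c x)" for x
  have a0: "0 \<le> a" using R0_X by simp
  have cdom: "x0 \<le> c x \<and> c x \<le> x0 + a" for x using a0 by (auto simp: c_def)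
  have cid: "x0 \<le> x \<Longrightarrow> x \<le> x0 + a \<Longrightarrow> c x = x" for x by (auto simp: c_def)
  have Hm[measurable]: "H \<in> borel_measurable borel" "H0 \<in> borel_measurable borel"
    unfolding H_def H0_def c_def using clamp_meas[OF h_mono a0] clamp_meas[OF h0_mono a0] by auto
  have Hb: "y0 \<le> H x" "H x \<le> y0 + b" "y0 \<le> H0 x" "H0 x \<le> y0 + b" for x
    using h_range h0_range cdom[of x] unfolding H_def H0_def by auto
  have Hid: "x0 \<le> x \<Longrightarrow> x \<le> x0 + a \<Longrightarrow> H x = h x \<and> H0 x = h0 x" for x
    using cid unfolding H_def H0_def by auto
  define C where "C = cand_points x0 a h0 n x1 x2 y1 y2"
  define P where "P = {x0, x0 + a} \<union> (C \<inter> {x0<..<x0 + a})"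
  have finC: "finite C"
  proof -
    have "finite {x. ereal x = x2 i}" for i
      by (rule finite_subset[of _ "{real_of_ereal (x2 i)}"]) (auto simp: eq_commute[of "ereal _"])
    then show ?thesis unfolding C_def cand_points_def by auto
  qed
  have finP: "finite P" unfolding P_def using finC by auto
  have xs_eq: "xs = sorted_list_of_set P" by (simp add: xs_def partition_pts_def P_def C_def)
  have setxs: "set xs = P" using finP xs_eq by simp
  have sorted: "sorted_wrt (<) xs" using xs_eq by (simp add: strict_sorted_list_of_set)
  have sorted_le: "xs!i \<le> xs!j" if "i \<le> j" "j < length xs" for i j
  proof (cases "i = j")
    case False then show ?thesis using sorted that sorted_wrt_nth_less[of "(<)" xs i j] by simp
  qed simp
  have Pdom: "x0 \<le> z \<and> z \<le> x0 + a" if "z \<in> P" for z using that a0 unfolding P_def by auto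
  have x0P: "x0 \<in> P" "x0 + a \<in> P" unfolding P_def by auto
  have candP: "z \<in> P" if "z \<in> C" "x0 < z" "z < x0 + a" for z using that unfolding P_def by auto
  have cons: "\<not> (xs!k < z \<and> z < xs!Suc k)" if "Suc k < length xs" "z \<in> P" for k z
  proof
    assume z: "xs!k < z \<and> z < xs!Suc k"
    have "z \<in> set xs" using that setxs by simp
    then obtain m where m: "m < length xs" "xs!m = z" unfolding in_set_conv_nth by blast
    show False
    proof (cases "m \<le> k")
      case True
      have "xs!m \<le> xs!k" by (rule sorted_le) (use True that in simp_all)
      then show False using m(2) z by linarith
    next
      case False
      have "xs!Suc k \<le> xs!m" by (rule sorted_le) (use False m in simp_all)
      then show False using m(2) z by linarith
    qed
  qed
  have kP: "xs!k \<in> P" "xs!Suc k \<in> P" "xs!k < xs!Suc k" if "Suc k < length xs" for k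
  proof -
    show "xs!k \<in> P" using that setxs nth_mem[of k xs] by simp
    show "xs!Suc k \<in> P" using that setxs nth_mem[of "Suc k" xs] by simp
    show "xs!k < xs!Suc k" using that sorted_wrt_nth_less[OF sorted, of k "Suc k"] by simp
  qed
  have notcand: "\<not> (xs!k < z \<and> z < xs!Suc k)" if "Suc k < length xs" "z \<in> C" for k z
  proof
    assume z: "xs!k < z \<and> z < xs!Suc k"
    have "x0 \<le> xs!k" using Pdom[OF kP(1)[OF that(1)]] by blast
    moreover have "xs!Suc k \<le> x0 + a" using Pdom[OF kP(2)[OF that(1)]] by blast
    ultimately have "x0 < z" "z < x0 + a" using z by linarith+
    then have "z \<in> P" using candP that(2) by blast
    then show False using cons[OF that(1)] z by blast
  qed
  have EQ: "(\<integral>\<^sup>+x. indicator {xs!k<..xs!Suc k} x * ennreal (H x - y0) \<partial>lborel)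
         = (\<integral>\<^sup>+x. indicator {xs!k<..xs!Suc k} x * ennreal (H0 x - y0) \<partial>lborel)
       \<and> (\<integral>\<^sup>+x. indicator {xs!k<..xs!Suc k} x * ennreal (H0 x - y0) \<partial>lborel) < \<infinity>"
    if k: "Suc k < length xs" for k
  proof -
    define p where "p = xs!k"
    define q where "q = xs!Suc k"
    have pq: "x0 \<le> p" "p < q" "q \<le> x0 + a"
      using kP[OF k] Pdom unfolding p_def q_def by force+
    define St where "St = {(x, y). p \<le> x \<and> x \<le> q \<and> y0 \<le> y} \<inter> R0"
    have St_eq: "St = {(x, y). p \<le> x \<and> x \<le> q \<and> y0 \<le> y \<and> y \<le> H0 x}"
      unfolding St_def R0_eq region_def using pq Hid by auto
    have em: "emeasure lborel St = (\<integral>\<^sup>+x. indicator {p..q} x * ennreal (H0 x - y0) \<partial>lborel)"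
      unfolding St_eq by (rule hypo_emeasure) simp
    have R0m: "R0 \<in> sets borel" using R0_closed by (simp add: borel_closed)
    have "emeasure lborel St \<le> emeasure lborel R0"
      by (rule emeasure_mono) (use R0m in \<open>auto simp: St_def\<close>)
    then have finSt: "emeasure lborel St < \<infinity>" using R0_meas(2) by simp
    have hint: "integral {p..q} (\<lambda>x. h x - y0) = measure lborel St"
      using h_int k unfolding St_def p_def q_def by simp
    have "mono_on {p..q} (\<lambda>x. - h x)"
      using h_mono pq by (auto simp: mono_on_def)
    then have "(\<lambda>x. - h x) integrable_on {p..q}" by (rule integrable_on_mono_on)
    then have "h integrable_on {p..q}" by (simp add: integrable_neg_iff)
    then have "(\<lambda>x. h x - y0) integrable_on {p..q}"
      by (intro integrable_diff) auto
    then have hi: "((\<lambda>x. h x - y0) has_integral integral {p..q} (\<lambda>x. h x - y0)) {p..q}"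
      by (simp add: integrable_integral)
    have "(\<integral>\<^sup>+x. ennreal (h x - y0) * indicator {p..q} x \<partial>lborel) = ennreal (integral {p..q} (\<lambda>x. h x - y0))"
      by (rule nn_integral_has_integral_lebesgue'[OF _ hi]) (use h_range pq in auto)
    moreover have "(\<integral>\<^sup>+x. ennreal (h x - y0) * indicator {p..q} x \<partial>lborel)
        = (\<integral>\<^sup>+x. indicator {p..q} x * ennreal (H x - y0) \<partial>lborel)"
      by (rule nn_integral_cong) (use Hid pq in \<open>auto simp: indicator_def\<close>)
    ultimately have "(\<integral>\<^sup>+x. indicator {p..q} x * ennreal (H x - y0) \<partial>lborel) = emeasure lborel St"
      using hint finSt by (simp add: emeasure_eq_ennreal_measure)
    then show ?thesis using em finSt unfolding p_def q_def by (simp add: Icc_Ioc_nn)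
  qed
  have key: "(\<integral>\<^sup>+x. indicator {L<..U} x * ennreal (min (H x) C2 - c1) \<partial>lborel)
      = (\<integral>\<^sup>+x. indicator {L<..U} x * ennreal (min (H0 x) C2 - c1) \<partial>lborel)"
    if c1: "y0 \<le> c1"
      and dich: "\<And>k. Suc k < length xs \<Longrightarrow>
        ((\<forall>x\<in>{xs!k<..xs!Suc k}. c1 \<le> H0 x \<and> c1 \<le> H x) \<or> (\<forall>x\<in>{xs!k<..xs!Suc k}. H0 x \<le> c1 \<and> H x \<le> c1))
      \<and> ((\<forall>x\<in>{xs!k<..xs!Suc k}. C2 \<le> H0 x \<and> C2 \<le> H x) \<or> (\<forall>x\<in>{xs!k<..xs!Suc k}. H0 x \<le> C2 \<and> H x \<le> C2))"
      and LU: "L \<in> P" "U \<in> P" "L < U"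
    for c1 C2 L U
  proof -
    have "L \<in> set xs" "U \<in> set xs" using LU setxs by simp_all
    then obtain i j where i: "i < length xs" "xs!i = L" and j: "j < length xs" "xs!j = U"
      unfolding in_set_conv_nth by blast
    have ij: "i \<le> j"
    proof (rule ccontr)
      assume "\<not> i \<le> j"
      then show False using sorted_le[of j i] i j LU by auto
    qed
    have "(\<integral>\<^sup>+x. indicator {xs!i<..xs!j} x * ennreal (min (H x) C2 - c1) \<partial>lborel)
      = (\<integral>\<^sup>+x. indicator {xs!i<..xs!j} x * ennreal (min (H0 x) C2 - c1) \<partial>lborel)"
    proof (rule telescope[OF _ _ sorted _ ij j(1)])
      fix k assume k: "Suc k < length xs"
      show "(\<integral>\<^sup>+x. indicator {xs!k<..xs!Suc k} x * ennreal (min (H x) C2 - c1) \<partial>lborel)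
        = (\<integral>\<^sup>+x. indicator {xs!k<..xs!Suc k} x * ennreal (min (H0 x) C2 - c1) \<partial>lborel)"
        using per_interval[OF Hm kP(3)[OF k] conjunct1[OF EQ[OF k]] conjunct2[OF EQ[OF k]] c1
             conjunct1[OF dich[OF k]] conjunct2[OF dich[OF k]]] .
    qed simp_all
    then show ?thesis using i j by simp
  qed
  have hbk: "\<forall>x\<in>{xs!k<..xs!Suc k}. h0 (xs!Suc k) \<le> h x \<and> h x \<le> Lim (at_right (xs!k)) h0"
    if "Suc k < length xs" for k using h_bounds that by blast
  have thr: "(\<forall>x\<in>{xs!k<..xs!Suc k}. y \<le> H0 x \<and> y \<le> H x) \<or> (\<forall>x\<in>{xs!k<..xs!Suc k}. H0 x \<le> y \<and> H x \<le> y)"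
    if k: "Suc k < length xs" and y: "inv_set x0 a h0 (ereal y) \<noteq> {} \<Longrightarrow> gen_inv x0 a h0 (ereal y) \<in> C" for k y
  proof -
    have pq: "x0 \<le> xs!k" "xs!k < xs!Suc k" "xs!Suc k \<le> x0 + a"
      using kP[OF k] Pdom by force+
    have "(\<forall>x\<in>{xs!k<..xs!Suc k}. y \<le> h0 x \<and> y \<le> h x) \<or> (\<forall>x\<in>{xs!k<..xs!Suc k}. h0 x \<le> y \<and> h x \<le> y)"
      by (rule dichotomy[OF h0_mono h0_lcont pq hbk[OF k]]) (use notcand[OF k] y in blast)
    moreover have "\<forall>x\<in>{xs!k<..xs!Suc k}. H x = h x \<and> H0 x = h0 x" using Hid pq by auto
    ultimately show ?thesis by auto
  qed
  have triv_lo: "(\<forall>x\<in>A. y0 \<le> H0 x \<and> y0 \<le> H x) \<or> Q" for A Q using Hb by auto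
  have triv_hi: "Q \<or> (\<forall>x\<in>A. H0 x \<le> y0 + b \<and> H x \<le> y0 + b)" for A Q using Hb by auto
  have regH: "region x0 y0 a g = {(x, y). x0 \<le> x \<and> x \<le> x0 + a \<and> y0 \<le> y \<and> y \<le> G x}"
    if "\<forall>x\<in>{x0..x0+a}. G x = g x" for g G using that unfolding region_def by auto
  have meas_eq: "emeasure lborel (region x0 y0 a h) = emeasure lborel R0"
  proof -
    have "emeasure lborel (region x0 y0 a h) = (\<integral>\<^sup>+x. indicator {x0..x0+a} x * ennreal (H x - y0) \<partial>lborel)"
    proof -
      have "region x0 y0 a h = {(x, y). x0 \<le> x \<and> x \<le> x0 + a \<and> y0 \<le> y \<and> y \<le> H x}"
        by (rule regH) (use Hid in auto)
      then show ?thesis by (simp add: hypo_emeasure)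
    qed
    also have "\<dots> = (\<integral>\<^sup>+x. indicator {x0<..x0+a} x * ennreal (min (H x) (y0 + b) - y0) \<partial>lborel)"
      using Hb by (simp add: Icc_Ioc_nn min_def)
    also have "\<dots> = (\<integral>\<^sup>+x. indicator {x0<..x0+a} x * ennreal (min (H0 x) (y0 + b) - y0) \<partial>lborel)"
      by (rule key) (use x0P R0_X triv_lo triv_hi in auto)
    also have "\<dots> = (\<integral>\<^sup>+x. indicator {x0..x0+a} x * ennreal (H0 x - y0) \<partial>lborel)"
      using Hb by (simp add: Icc_Ioc_nn min_def)
    also have "\<dots> = emeasure lborel R0"
    proof -
      have "region x0 y0 a h0 = {(x, y). x0 \<le> x \<and> x \<le> x0 + a \<and> y0 \<le> y \<and> y \<le> H0 x}"
        by (rule regH) (use Hid in auto)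
      then show ?thesis unfolding R0_eq by (simp add: hypo_emeasure)
    qed
    finally show ?thesis .
  qed
  have OX: "OU_X x0 y0 (region x0 y0 a h) \<le> OU_X x0 y0 R0"
  proof -
    have "{x. (x, y0) \<in> region x0 y0 a h} = {x0..x0+a}"
      unfolding region_def using h_range by auto
    moreover have "Sup (ereal ` {x0..x0+a}) = ereal (x0 + a)"
      by (rule antisym) (use a0 in \<open>auto intro: Sup_upper Sup_least\<close>)
    ultimately have "OU_X x0 y0 (region x0 y0 a h) = ereal a" unfolding OU_X_def by simp
    then show ?thesis using R0_X by simp
  qed
  have OY: "OU_Y x0 y0 (region x0 y0 a h) \<le> OU_Y x0 y0 R0"
  proof -
    have hx0: "y0 \<le> h x0" "h x0 \<le> y0 + b" using h_range a0 by auto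
    have "{y. (x0, y) \<in> region x0 y0 a h} = {y0..h x0}"
      unfolding region_def using a0 by auto
    moreover have "Sup (ereal ` {y0..h x0}) = ereal (h x0)"
      by (rule antisym) (use hx0 in \<open>auto intro: Sup_upper Sup_least\<close>)
    ultimately have "OU_Y x0 y0 (region x0 y0 a h) = ereal (h x0 - y0)" unfolding OU_Y_def by simp
    then show ?thesis using R0_Y hx0 by simp
  qed
  have RECT: "emeasure lborel (rect (x1 i) (x2 i) (y1 i) (y2 i) \<inter> region x0 y0 a h)
           = emeasure lborel (rect (x1 i) (x2 i) (y1 i) (y2 i) \<inter> R0)" if i: "i \<in> {1..n}" for i
  proof -
    have ri: "x0 \<le> x1 i" "ereal (x1 i) \<le> x2 i" "y0 \<le> y1 i" "ereal (y1 i) \<le> y2 i" using rects i by auto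
    define X2 where "X2 = (if x2 i = \<infinity> then x0 + a else real_of_ereal (x2 i))"
    define Y2 where "Y2 = (if y2 i = \<infinity> then y0 + b else real_of_ereal (y2 i))"
    define U where "U = min (x0 + a) X2"
    have Gh: "\<forall>x\<in>{x0..x0 + a}. H x = h x \<and> h x \<le> y0 + b"
    proof
      fix x assume "x \<in> {x0..x0 + a}"
      then show "H x = h x \<and> h x \<le> y0 + b" using Hid[of x] h_range by simp
    qed
    have Gh0: "\<forall>x\<in>{x0..x0 + a}. H0 x = h0 x \<and> h0 x \<le> y0 + b"
    proof
      fix x assume "x \<in> {x0..x0 + a}"
      then show "H0 x = h0 x \<and> h0 x \<le> y0 + b" using Hid[of x] h0_range by simp
    qed
    have mm: "(\<lambda>x. min (H x) Y2) \<in> borel_measurable borel" "(\<lambda>x. min (H0 x) Y2) \<in> borel_measurable borel"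
      by (intro borel_measurable_min Hm borel_measurable_const)+
    have "rect (x1 i) (x2 i) (y1 i) (y2 i) \<inter> region x0 y0 a h
        = {(x,y). x1 i \<le> x \<and> x \<le> U \<and> y1 i \<le> y \<and> y \<le> min (H x) Y2}"
      using rect_region[OF ri Gh] unfolding X2_def Y2_def U_def by simp
    then have e1: "emeasure lborel (rect (x1 i) (x2 i) (y1 i) (y2 i) \<inter> region x0 y0 a h)
       = (\<integral>\<^sup>+x. indicator {x1 i<..U} x * ennreal (min (H x) Y2 - y1 i) \<partial>lborel)"
      using hypo_emeasure[OF mm(1), of "x1 i" U "y1 i"] by (simp add: Icc_Ioc_nn)
    have "rect (x1 i) (x2 i) (y1 i) (y2 i) \<inter> R0
        = {(x,y). x1 i \<le> x \<and> x \<le> U \<and> y1 i \<le> y \<and> y \<le> min (H0 x) Y2}"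
      using rect_region[OF ri Gh0] unfolding X2_def Y2_def U_def R0_eq by simp
    then have e2: "emeasure lborel (rect (x1 i) (x2 i) (y1 i) (y2 i) \<inter> R0)
       = (\<integral>\<^sup>+x. indicator {x1 i<..U} x * ennreal (min (H0 x) Y2 - y1 i) \<partial>lborel)"
      using hypo_emeasure[OF mm(2), of "x1 i" U "y1 i"] by (simp add: Icc_Ioc_nn)
    show ?thesis
    proof (cases "U \<le> x1 i")
      case True
      then have "{x1 i<..U} = {}" by auto
      then show ?thesis unfolding e1 e2 by simp
    next
      case False
      then have lu: "x1 i < U" by simp
      have U_le: "U \<le> x0 + a" unfolding U_def by simp
      have y1C: "inv_set x0 a h0 (ereal (y1 i)) \<noteq> {} \<Longrightarrow> gen_inv x0 a h0 (ereal (y1 i)) \<in> C"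
        unfolding C_def cand_points_def by (rule UN_I[OF i]) simp
      have x1P: "x1 i \<in> P"
      proof (cases "x1 i = x0")
        case True then show ?thesis using x0P by simp
      next
        case False
        have "x1 i \<in> C" unfolding C_def cand_points_def by (rule UN_I[OF i]) simp
        then show ?thesis using candP False ri(1) lu U_le by auto
      qed
      have UP: "U \<in> P"
      proof (cases "x0 + a \<le> X2")
        case True then have "U = x0 + a" unfolding U_def by simp
        then show ?thesis using x0P by simp
      next
        case False
        then have UX: "U = X2" "X2 < x0 + a" unfolding U_def by auto
        then have nt: "x2 i \<noteq> \<infinity>" unfolding X2_def by auto
        then have "x2 i = ereal X2" using ri(2) unfolding X2_def by (cases "x2 i") auto
        then have "X2 \<in> C" unfolding C_def cand_points_def by (intro UN_I[OF i]) simp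
        then show ?thesis using candP UX lu ri(1) by auto
      qed
      show ?thesis unfolding e1 e2
      proof (rule key[OF ri(3) _ x1P UP lu])
        fix k assume k: "Suc k < length xs"
        have d1: "(\<forall>x\<in>{xs!k<..xs!Suc k}. y1 i \<le> H0 x \<and> y1 i \<le> H x) \<or> (\<forall>x\<in>{xs!k<..xs!Suc k}. H0 x \<le> y1 i \<and> H x \<le> y1 i)"
          by (rule thr[OF k y1C])
        have d2: "(\<forall>x\<in>{xs!k<..xs!Suc k}. Y2 \<le> H0 x \<and> Y2 \<le> H x) \<or> (\<forall>x\<in>{xs!k<..xs!Suc k}. H0 x \<le> Y2 \<and> H x \<le> Y2)"
        proof (cases "y2 i = \<infinity>")
          case True then show ?thesis unfolding Y2_def using triv_hi by simp
        next
          case False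
          then have "y2 i = ereal Y2" using ri(4) unfolding Y2_def by (cases "y2 i") auto
          then have "inv_set x0 a h0 (ereal Y2) \<noteq> {} \<Longrightarrow> gen_inv x0 a h0 (ereal Y2) \<in> C"
            unfolding C_def cand_points_def by (intro UN_I[OF i]) simp
          then show ?thesis by (rule thr[OF k])
        qed
        show "((\<forall>x\<in>{xs!k<..xs!Suc k}. y1 i \<le> H0 x \<and> y1 i \<le> H x) \<or> (\<forall>x\<in>{xs!k<..xs!Suc k}. H0 x \<le> y1 i \<and> H x \<le> y1 i))
          \<and> ((\<forall>x\<in>{xs!k<..xs!Suc k}. Y2 \<le> H0 x \<and> Y2 \<le> H x) \<or> (\<forall>x\<in>{xs!k<..xs!Suc k}. H0 x \<le> Y2 \<and> H x \<le> Y2))"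
          using d1 d2 by blast
      qed
    qed
  qed
  show ?thesis using meas_eq OX OY RECT by blast
qed

end
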